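(* Fix an integer $M\ge2$ and constants $T_s,L_{s,d},L_{s,r},L_{r,d}>0$, $\delta\in(0,1]$, $\varrho\in(0,1)$. Put $g_{s,d}=\sin^2(\pi/M)T_sL_{s,d}$ and $g_{r,d}=\sin^2(\pi/M)T_sL_{s,r}L_{r,d}$. For $\bar\gamma>0$ set $\bar\gamma_{s,r}=\bar\gamma_{s,d}=\bar\gamma_{r,d}=P_s/N_0=\bar\gamma$, let $\epsilon$ be defined by $\bar\gamma^{ID}_{s,r}=\frac{2(1-\varrho)T_sL_{s,r}}{2-\varrho}\bar\gamma$ and $$\epsilon=\frac{1}{2(1+\bar\gamma^{ID}_{s,r})}\ (M=2),\qquad \epsilon=1.03\sqrt{\tfrac{1+\cos\frac{\pi}{M}}{2\cos\frac{\pi}{M}}}\Big[1-\sqrt{\tfrac{(1-\cos\frac{\pi}{M})\bar\gamma^{ID}_{s,r}}{1+(1-\cos\frac{\pi}{M})\bar\gamma^{ID}_{s,r}}}\Big]\ (M>2),$$ and $\eta=\ln\frac{(1-\epsilon)(M-1)}{\epsilon}$. Define $$a_1=\frac{\sqrt\pi\,(2g_{s,d})^{-1/4}}{4\bar\gamma}\Big(\frac{g_{s,d}}2+\bar\gamma^{-1}\Big)^{-3/4},\quad b_1=\frac14+\frac{\sqrt{g_{s,d}/2+\bar\gamma^{-1}}}{2\sqrt{2g_{s,d}}},$$ $$a_2=\frac{2\bar\gamma}{\delta g_{r,d}(g_{s,d}\bar\gamma+2)\bar\gamma^2},\quad b_2=\frac{\delta g_{r,d}\bar\gamma^2}{2\bar\gamma},$$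 $$Z_1=a_1\sqrt{2\eta}\,e^{-2b_1\eta},\quad Z_2=\frac{a_2}{\varrho}\ln(1+b_2\varrho),\quad Z_3=e^{\eta}Z_1,$$ $$\mathcal P_C=(1-\epsilon)(Z_1+Z_2),\qquad \mathcal P_E=\frac{\epsilon Z_3}{M-1}+\frac{\epsilon}{g_{s,d}\bar\gamma+2}.$$ Then $\mathcal P_C+\mathcal P_E$ (which is well defined and positive for all sufficiently large $\bar\gamma$) satisfies $$\lim_{\bar\gamma\to\infty}\frac{\ln(\mathcal P_C+\mathcal P_E)}{\ln\bar\gamma}=-2,$$ i.e. the diversity order is two.
   Context: $\mathcal P_C+\mathcal P_E$ is the paper's closed-form approximate average symbol error rate of its proposed detector at the destination of a three-node SWIPT-enabled differential decode-and-forward relay network with $M$-DPSK and power splitting ratio $\varrho$ at the relay, under Rayleigh fading with average SNRs $\bar\gamma_{s,r},\bar\gamma_{s,d},\bar\gamma_{r,d}$ (all set equal to $\bar\gamma$, with unit-mean channel gains so that $P_s/N_0=\bar\gamma$). *)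

theory Defs
  imports "HOL-Analysis.Analysis"
begin

text \<open>All quantities are functions of the common average SNR g (= gamma bar).
Parameters: M (constellation size), Ts, Lsd, Lsr, Lrd, delta, rho (power splitting ratio).\<close>

definition g_sd :: "nat \<Rightarrow> real \<Rightarrow> real \<Rightarrow> real" where
  "g_sd M Ts Lsd = (sin (pi / real M))\<^sup>2 * Ts * Lsd"

definition g_rd :: "nat \<Rightarrow> real \<Rightarrow> real \<Rightarrow> real \<Rightarrow> real" where
  "g_rd M Ts Lsr Lrd = (sin (pi / real M))\<^sup>2 * Ts * Lsr * Lrd"

definition gamma_ID_sr :: "real \<Rightarrow> real \<Rightarrow> real \<Rightarrow> real \<Rightarrow> real" where
  "gamma_ID_sr rho Ts Lsr g = 2 * (1 - rho) * Ts * Lsr / (2 - rho) * g"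

definition eps_err :: "nat \<Rightarrow> real \<Rightarrow> real \<Rightarrow> real \<Rightarrow> real \<Rightarrow> real" where
  "eps_err M rho Ts Lsr g =
     (let gi = gamma_ID_sr rho Ts Lsr g; c = cos (pi / real M) in
      if M = 2 then 1 / (2 * (1 + gi))
      else 1.03 * sqrt ((1 + c) / (2 * c)) * (1 - sqrt ((1 - c) * gi / (1 + (1 - c) * gi))))"

definition eta_thr :: "nat \<Rightarrow> real \<Rightarrow> real" where
  "eta_thr M e = ln ((1 - e) * (real M - 1) / e)"

definition SER :: "nat \<Rightarrow> real \<Rightarrow> real \<Rightarrow> real \<Rightarrow> real \<Rightarrow> real \<Rightarrow> real \<Rightarrow> real \<Rightarrow> real" where
  "SER M Ts Lsd Lsr Lrd delta rho g =
     (let gsd = g_sd M Ts Lsd; grd = g_rd M Ts Lsr Lrd;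
          e = eps_err M rho Ts Lsr g; eta = eta_thr M e;
          a1 = sqrt pi * (2 * gsd) powr (-1/4) / (4 * g) * (gsd / 2 + 1 / g) powr (-3/4);
          b1 = 1/4 + sqrt (gsd / 2 + 1 / g) / (2 * sqrt (2 * gsd));
          a2 = 2 * g / (delta * grd * (gsd * g + 2) * g\<^sup>2);
          b2 = delta * grd * g\<^sup>2 / (2 * g);
          Z1 = a1 * sqrt (2 * eta) * exp (- 2 * b1 * eta);
          Z2 = a2 / rho * ln (1 + b2 * rho);
          Z3 = exp eta * Z1;
          PC = (1 - e) * (Z1 + Z2);
          PE = e * Z3 / (real M - 1) + e / (gsd * g + 2)
      in PC + PE)"

end

theory Submission
  imports Defs "HOL-Real_Asymp.Real_Asymp"
begin

lemma sqrt_aux: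
  fixes x :: real assumes "x \<ge> 1"
  defines "y \<equiv> x / (1 + x)"
  shows "1 - sqrt y \<le> 1 / x" "1 / (4 * x) \<le> 1 - sqrt y"
proof -
  have y0: "0 \<le> y" "y \<le> 1" using assms by (auto simp: y_def field_simps)
  have "y \<le> sqrt y" by (rule real_le_rsqrt) (use y0 in \<open>simp add: power2_eq_square mult_right_le_one_le\<close>)
  moreover have y1: "1 - y = 1 / (1 + x)" using assms by (simp add: y_def field_simps)
  moreover have "1 / (1 + x) \<le> 1 / x" using assms by (simp add: frac_le)
  ultimately show "1 - sqrt y \<le> 1 / x" by linarith
  have sq: "0 \<le> (1 - y)^2" by simp
  have "sqrt y \<le> (1 + y) / 2"
    by (rule real_le_lsqrt) (use y0 sq in \<open>auto simp: power2_eq_square field_simps\<close>)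
  hence "(1 - y) / 2 \<le> 1 - sqrt y" by (simp add: field_simps)
  moreover have "1 / (4 * x) \<le> (1 - y) / 2" unfolding y1 using assms by (simp add: field_simps)
  ultimately show "1 / (4 * x) \<le> 1 - sqrt y" by linarith
qed
lemma eps_bounds:
  assumes M: "M \<ge> 2" and Ts: "Ts > 0" and Lsr: "Lsr > 0" and r0: "rho > 0" and r1: "rho < 1"
  shows "\<exists>k K. 0 < k \<and> (\<forall>\<^sub>F g in at_top. k / g \<le> eps_err M rho Ts Lsr g \<and>
            eps_err M rho Ts Lsr g \<le> K / g \<and> eps_err M rho Ts Lsr g \<le> 1/2)"
proof -
  define c0 where "c0 = 2 * (1 - rho) * Ts * Lsr / (2 - rho)"
  have c0: "c0 > 0" using assms by (simp add: c0_def)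
  have gi: "\<And>g. gamma_ID_sr rho Ts Lsr g = c0 * g" by (simp add: gamma_ID_sr_def c0_def)
  show ?thesis
  proof (cases "M = 2")
    case True
    have e: "\<And>g. eps_err M rho Ts Lsr g = 1 / (2 * (1 + c0 * g))"
      by (simp add: eps_err_def gi True)
    have ev: "\<forall>\<^sub>F g in at_top. g \<ge> 1 / c0" by (rule eventually_ge_at_top)
    have "\<forall>\<^sub>F g in at_top. (1/(4*c0)) / g \<le> eps_err M rho Ts Lsr g \<and>
            eps_err M rho Ts Lsr g \<le> (1/(2*c0)) / g \<and> eps_err M rho Ts Lsr g \<le> 1/2"
      using ev
    proof eventually_elim
      case (elim g)
      have cg: "c0 * g \<ge> 1" using elim c0 by (simp add: field_simps)
      show ?case unfolding e using cg c0 by (auto simp: field_simps)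
    qed
    thus ?thesis using c0 by (intro exI[of _ "1/(4*c0)"] exI[of _ "1/(2*c0)"]) auto
  next
    case False
    hence M3: "real M \<ge> 3" using M by linarith
    define c where "c = cos (pi / real M)"
    have pM: "0 < pi / real M" "pi / real M < pi / 2" using M3 by (auto simp: field_simps)
    have c0': "0 < c" unfolding c_def by (rule cos_gt_zero_pi) (use pM in auto)
    have c1: "c < 1" unfolding c_def using cos_monotone_0_pi[of 0 "pi / real M"] pM by simp
    define A where "A = 1.03 * sqrt ((1 + c) / (2 * c))"
    have A: "A > 0" using c0' by (simp add: A_def)
    define d where "d = (1 - c) * c0"
    have d: "d > 0" using c1 c0 by (simp add: d_def)
    have e: "\<And>g. eps_err M rho Ts Lsr g = A * (1 - sqrt (d * g / (1 + d * g)))"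
      by (simp add: eps_err_def gi False A_def d_def c_def Let_def mult.assoc)
    have ev: "\<forall>\<^sub>F g in at_top. g \<ge> max (1 / d) (2 * (A / d))" by (rule eventually_ge_at_top)
    have "\<forall>\<^sub>F g in at_top. (A/(4*d)) / g \<le> eps_err M rho Ts Lsr g \<and>
            eps_err M rho Ts Lsr g \<le> (A/d) / g \<and> eps_err M rho Ts Lsr g \<le> 1/2"
      using ev
    proof eventually_elim
      case (elim g)
      have dg: "d * g \<ge> 1" using elim d by (simp add: field_simps)
      have g0: "g > 0" using dg d by (smt (verit) mult_nonneg_nonpos)
      note s = sqrt_aux[OF dg]
      have u: "eps_err M rho Ts Lsr g \<le> (A/d) / g"
        unfolding e using mult_left_mono[OF s(1), of A] A by (simp add: field_simps)
      have l: "(A/(4*d)) / g \<le> eps_err M rho Ts Lsr g"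
        unfolding e using mult_left_mono[OF s(2), of A] A by (simp add: field_simps)
      have "(A/d) / g \<le> 1/2" using elim g0 d by (simp add: field_simps)
      with u l show ?case by linarith
    qed
    thus ?thesis using A d by (intro exI[of _ "A/(4*d)"] exI[of _ "A/d"]) auto
  qed
qed
lemma sqrt_le_1plus: "0 \<le> (x::real) \<Longrightarrow> sqrt x \<le> 1 + x"
  by (rule real_le_lsqrt) (auto simp: power2_eq_square algebra_simps)

lemma core:
  fixes M :: nat and Ts Lsd Lsr Lrd delta rho g k K :: real
  assumes M: "M \<ge> 2" and Ts: "Ts > 0" and Lsd: "Lsd > 0" and Lsr: "Lsr > 0" and Lrd: "Lrd > 0"
    and dl: "0 < delta" and r0: "0 < rho" and r1: "rho < 1" and g1: "g \<ge> 1" and k: "0 < k"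
    and el: "k / g \<le> eps_err M rho Ts Lsr g" and eu: "eps_err M rho Ts Lsr g \<le> K / g"
    and eh: "eps_err M rho Ts Lsr g \<le> 1/2"
    and gsd_def: "gsd = g_sd M Ts Lsd" and grd_def: "grd = g_rd M Ts Lsr Lrd"
    and L_def: "L = \<bar>ln ((real M - 1) / k)\<bar>"
    and A1_def: "A1 = sqrt pi * (2 * gsd) powr (-1/4) / 4 * (gsd / 2) powr (-3/4)"
    and B_def: "B = 3 * (A1 * K * (2 + 2 * L)) + 2 / (delta * grd * gsd * rho) * (1 + ln (1 + delta * grd / 2)) + K / gsd"
  shows "k / ((gsd + 2) * g\<^sup>2) \<le> SER M Ts Lsd Lsr Lrd delta rho g"
    "SER M Ts Lsd Lsr Lrd delta rho g \<le> B * (1 + ln g) / g\<^sup>2"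
proof -
  have sinpos: "sin (pi / real M) > 0" using M by (intro sin_gt_zero) (auto simp: field_simps)
  have gsd: "gsd > 0" using sinpos Ts Lsd by (simp add: gsd_def g_sd_def)
  have grd: "grd > 0" using sinpos Ts Lsr Lrd by (simp add: grd_def g_rd_def)
  have g0: "g > 0" using g1 by simp
  define e where "e = eps_err M rho Ts Lsr g"
  define Mr where "Mr = real M - 1"
  have Mr: "Mr \<ge> 1" using M by (simp add: Mr_def)
  define eta where "eta = ln ((1 - e) * Mr / e)"
  define a1 where "a1 = sqrt pi * (2 * gsd) powr (-1/4) / (4 * g) * (gsd / 2 + 1 / g) powr (-3/4)"
  define b1 where "b1 = 1/4 + sqrt (gsd / 2 + 1 / g) / (2 * sqrt (2 * gsd))"
  define a2 where "a2 = 2 * g / (delta * grd * (gsd * g + 2) * g\<^sup>2)"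
  define b2 where "b2 = delta * grd * g\<^sup>2 / (2 * g)"
  define Z1 where "Z1 = a1 * sqrt (2 * eta) * exp (- 2 * b1 * eta)"
  define Z2 where "Z2 = a2 / rho * ln (1 + b2 * rho)"
  define Z3 where "Z3 = exp eta * Z1"
  have S: "SER M Ts Lsd Lsr Lrd delta rho g = (1 - e) * (Z1 + Z2) + (e * Z3 / Mr + e / (gsd * g + 2))"
    unfolding SER_def Let_def gsd_def grd_def e_def Mr_def eta_thr_def eta_def a1_def b1_def a2_def b2_def
      Z1_def Z2_def Z3_def by simp
  have el': "k / g \<le> e" and eu': "e \<le> K / g" and eh': "e \<le> 1/2"
    using el eu eh unfolding e_def by simp_all
  have kg: "k / g > 0" using k g0 by simp
  have e0: "e > 0" using kg el' by linarith
  have oe: "1 - e \<ge> 1/2" using eh' by linarith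
  have oeM: "(1 - e) * Mr \<ge> 1 - e" using mult_left_mono[OF Mr, of "1 - e"] oe by simp
  have q0: "(1 - e) * Mr / e > 0" using e0 oe Mr by (intro divide_pos_pos mult_pos_pos) linarith+
  have eta0: "eta \<ge> 0" unfolding eta_def
  proof (rule ln_ge_zero)
    have "e \<le> (1 - e) * Mr" using eh' oeM by linarith
    thus "1 \<le> (1 - e) * Mr / e" using e0 by (simp add: le_divide_eq)
  qed
  have expm: "exp (- eta) = e / ((1 - e) * Mr)"
    unfolding eta_def exp_minus using q0 by simp
  have expm_le: "exp (- eta) \<le> 2 * K / g"
  proof -
    have "(1 - e) * Mr \<ge> 1/2" using oe oeM by linarith
    hence "e / ((1 - e) * Mr) \<le> e / (1/2)" using e0 by (intro divide_left_mono) auto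
    thus ?thesis using expm eu' by simp
  qed
  have eta_le: "eta \<le> L + ln g"
  proof -
    have "(1 - e) * Mr / e \<le> Mr / e" using e0 Mr by (simp add: divide_right_mono)
    also have "\<dots> \<le> Mr / (k / g)" using el' Mr by (intro divide_left_mono) (simp_all add: e0 k g0 zero_less_mult_iff)
    also have "\<dots> = (Mr / k) * g" by simp
    finally have "eta \<le> ln ((Mr / k) * g)" unfolding eta_def using q0 by simp
    also have "\<dots> = ln (Mr / k) + ln g" using ln_mult[of "Mr/k" g] Mr k g0 by simp
    finally show ?thesis unfolding L_def Mr_def by linarith
  qed
  have lg: "ln g \<ge> 0" using g1 by simp
  have L0: "L \<ge> 0" by (simp add: L_def)
  have sq: "sqrt (2 * eta) \<le> 1 + 2 * L + 2 * ln g"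
    using sqrt_le_1plus[of "2 * eta"] eta0 eta_le by linarith
  have sq0: "sqrt (2 * eta) \<ge> 0" using eta0 by simp
  have a10: "a1 \<ge> 0" unfolding a1_def using g0 by simp
  have a1u: "a1 \<le> A1 / g"
  proof -
    have "(gsd / 2 + 1 / g) powr (-3/4) \<le> (gsd / 2) powr (-3/4)"
      using gsd g0 by (intro powr_mono2') auto
    thus ?thesis unfolding a1_def A1_def using g0
      by (simp add: divide_right_mono mult_left_mono)
  qed
  have b1: "b1 \<ge> 1/2"
  proof -
    have "sqrt (gsd / 2) \<le> sqrt (gsd / 2 + 1 / g)" using g0 by simp
    moreover have "sqrt (gsd / 2) = sqrt (2 * gsd) / 2"
    proof -
      have s2: "sqrt 2 * sqrt 2 = (2::real)" by simp
      show ?thesis unfolding real_sqrt_mult real_sqrt_divide using s2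
        by (simp add: field_simps)
    qed
    ultimately have "sqrt (2 * gsd) / 2 / (2 * sqrt (2 * gsd)) \<le> sqrt (gsd / 2 + 1 / g) / (2 * sqrt (2 * gsd))"
      using gsd by (intro divide_right_mono) auto
    moreover have "sqrt (2 * gsd) / 2 / (2 * sqrt (2 * gsd)) = 1/4" using gsd by simp
    ultimately show ?thesis unfolding b1_def by linarith
  qed
  have ex1: "exp (- 2 * b1 * eta) \<le> exp (- eta)"
  proof -
    have "1 * eta \<le> (2 * b1) * eta" using b1 eta0 by (intro mult_right_mono) auto
    thus ?thesis by simp
  qed
  have Z10: "Z1 \<ge> 0" unfolding Z1_def using a10 sq0 by simp
  have Z1u: "Z1 \<le> 2 * (A1 * K * (2 + 2 * L)) * (1 + ln g) / g\<^sup>2"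
  proof -
    have ex2: "exp (- 2 * b1 * eta) \<le> 2 * K / g" using ex1 expm_le by linarith
    have A1g: "0 \<le> A1 / g" using a10 a1u by linarith
    have T0: "0 \<le> 1 + 2 * L + 2 * ln g" using L0 lg by linarith
    have p1: "a1 * sqrt (2 * eta) \<le> (A1 / g) * (1 + 2 * L + 2 * ln g)"
      by (rule mult_mono[OF a1u sq A1g sq0])
    have "Z1 \<le> (A1 / g) * (1 + 2 * L + 2 * ln g) * (2 * K / g)"
      unfolding Z1_def by (rule mult_mono[OF p1 ex2 mult_nonneg_nonneg[OF A1g T0] exp_ge_zero])
    also have "\<dots> \<le> (A1 / g) * ((2 + 2 * L) * (1 + ln g)) * (2 * K / g)"
    proof -
      have "1 + 2 * L + 2 * ln g \<le> (2 + 2 * L) * (1 + ln g)" using L0 lg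
        by (simp add: algebra_simps)
      moreover have "0 \<le> A1 / g" using a10 a1u by linarith
      moreover have "0 \<le> 2 * K / g" using expm_le by (smt (verit) exp_gt_zero)
      ultimately show ?thesis by (intro mult_right_mono mult_left_mono) auto
    qed
    also have "\<dots> = 2 * (A1 * K * (2 + 2 * L)) * (1 + ln g) / g\<^sup>2"
      by (simp add: power2_eq_square field_simps)
    finally show ?thesis .
  qed
  have TT: "1 + 2 * L + 2 * ln g \<le> (2 + 2 * L) * (1 + ln g)" using L0 lg
    by (simp add: algebra_simps)
  have A1g: "0 \<le> A1 / g" using a10 a1u by linarith
  have sq0': "0 \<le> a1 * sqrt (2 * eta)" using a10 sq0 by simp
  have p1: "a1 * sqrt (2 * eta) \<le> (A1 / g) * (1 + 2 * L + 2 * ln g)"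
    by (rule mult_mono[OF a1u sq A1g sq0])
  have Z3eq: "Z3 = a1 * sqrt (2 * eta) * (exp eta * exp (- 2 * b1 * eta))"
    unfolding Z3_def Z1_def by (simp add: algebra_simps)
  have ee: "exp eta * exp (- 2 * b1 * eta) \<le> 1"
  proof -
    have "exp eta * exp (- 2 * b1 * eta) \<le> exp eta * exp (- eta)"
      using ex1 by (intro mult_left_mono) auto
    thus ?thesis by (simp add: exp_minus)
  qed
  have Z30: "Z3 \<ge> 0" unfolding Z3_def using Z10 by simp
  have Z3u: "Z3 \<le> (A1 / g) * (1 + 2 * L + 2 * ln g)"
  proof -
    have "Z3 \<le> a1 * sqrt (2 * eta) * 1" unfolding Z3eq
      by (rule mult_left_mono[OF ee sq0'])
    thus ?thesis using p1 by simp
  qed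
  have K0: "K / g \<ge> 0" using e0 eu' by linarith
  have PEu1: "e * Z3 / Mr \<le> A1 * K * (2 + 2 * L) * (1 + ln g) / g\<^sup>2"
  proof -
    have x0: "0 \<le> e * Z3" using e0 Z30 by simp
    have "e * Z3 / Mr \<le> e * Z3 / 1" using Mr x0 by (intro divide_left_mono) auto
    hence "e * Z3 / Mr \<le> e * Z3" by simp
    also have "\<dots> \<le> (K / g) * ((A1 / g) * (1 + 2 * L + 2 * ln g))"
      by (rule mult_mono[OF eu' Z3u K0 Z30])
    also have "\<dots> \<le> (K / g) * ((A1 / g) * ((2 + 2 * L) * (1 + ln g)))"
      by (intro mult_left_mono TT A1g K0)
    also have "\<dots> = A1 * K * (2 + 2 * L) * (1 + ln g) / g\<^sup>2"
      by (simp add: power2_eq_square field_simps)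
    finally show ?thesis .
  qed
  have PE0: "e * Z3 / Mr \<ge> 0" using e0 Z30 Mr by simp
  define cc where "cc = 1 + delta * grd / 2"
  have cc: "cc \<ge> 1" using dl grd by (simp add: cc_def)
  have a2eq: "a2 = 2 / (delta * grd * (gsd * g + 2) * g)"
  proof -
    have eq: "delta * grd * (gsd * g + 2) * g\<^sup>2 = (delta * grd * (gsd * g + 2) * g) * g"
      by (simp add: power2_eq_square)
    have "a2 = (2 * g) / ((delta * grd * (gsd * g + 2) * g) * g)" by (simp only: a2_def eq)
    also have "\<dots> = 2 / (delta * grd * (gsd * g + 2) * g)" using g0 by simp
    finally show ?thesis .
  qed
  have a20: "a2 \<ge> 0" unfolding a2eq using dl grd gsd g0 by simp
  have a2u: "a2 \<le> 2 / (delta * grd * gsd * g\<^sup>2)"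
  proof -
    have D1: "0 < delta * grd * gsd * g\<^sup>2" using dl grd gsd g0 by simp
    have D2: "0 < delta * grd * (gsd * g + 2) * g" using dl grd gsd g0 by (intro mult_pos_pos add_pos_pos) auto
    have D12: "delta * grd * gsd * g\<^sup>2 \<le> delta * grd * (gsd * g + 2) * g"
    proof -
      have "0 \<le> delta * grd * 2 * g" using dl grd g0 by simp
      thus ?thesis by (simp add: power2_eq_square algebra_simps)
    qed
    show ?thesis unfolding a2eq
      by (rule divide_left_mono[OF D12]) (use D1 D2 in auto)
  qed
  have b2eq: "b2 = delta * grd * g / 2" unfolding b2_def using g0 by (simp add: power2_eq_square)
  have lb0: "ln (1 + b2 * rho) \<ge> 0" unfolding b2eq using dl grd g0 r0 by simp
  have lbu: "ln (1 + b2 * rho) \<le> ln cc + ln g"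
  proof -
    have "b2 * rho \<le> b2" unfolding b2eq using dl grd g0 r1 by (simp add: mult_le_cancel_left1)
    moreover have "1 + b2 \<le> cc * g" unfolding b2eq cc_def using g1 dl grd
      by (simp add: algebra_simps)
    ultimately have "1 + b2 * rho \<le> cc * g" by linarith
    moreover have "b2 > 0" unfolding b2eq using dl grd g0 by simp
    hence "0 < 1 + b2 * rho" using r0 by (smt (verit) mult_pos_pos)
    moreover have "0 < cc * g" using cc g0 by simp
    ultimately have "ln (1 + b2 * rho) \<le> ln (cc * g)" by simp
    thus ?thesis using ln_mult[of cc g] cc g0 by simp
  qed
  have Z20: "Z2 \<ge> 0" unfolding Z2_def using a20 lb0 r0 by simp
  have Z2u: "Z2 \<le> 2 / (delta * grd * gsd * rho) * (1 + ln cc) * (1 + ln g) / g\<^sup>2"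
  proof -
    have lc: "ln cc \<ge> 0" using cc by simp
    have "ln cc + ln g \<le> (1 + ln cc) * (1 + ln g)" using lc lg by (simp add: algebra_simps)
    hence lbu': "ln (1 + b2 * rho) \<le> (1 + ln cc) * (1 + ln g)" using lbu by linarith
    have "Z2 = (a2 / rho) * ln (1 + b2 * rho)" unfolding Z2_def by simp
    also have "\<dots> \<le> (2 / (delta * grd * gsd * g\<^sup>2) / rho) * ((1 + ln cc) * (1 + ln g))"
      using a2u a20 r0 lbu' lb0 dl grd gsd g0 by (intro mult_mono divide_right_mono) auto
    also have "\<dots> = 2 / (delta * grd * gsd * rho) * (1 + ln cc) * (1 + ln g) / g\<^sup>2"
      by (simp add: field_simps)
    finally show ?thesis .
  qed
  have l0: "e / (gsd * g + 2) \<ge> 0" using e0 gsd g0 by simp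
  have lu: "e / (gsd * g + 2) \<le> K / gsd * (1 + ln g) / g\<^sup>2"
  proof -
    have "e / (gsd * g + 2) \<le> (K / g) / (gsd * g)"
      using eu' e0 gsd g0 by (intro frac_le) auto
    also have "\<dots> = K / gsd * 1 / g\<^sup>2" by (simp add: power2_eq_square field_simps)
    also have "\<dots> \<le> K / gsd * (1 + ln g) / g\<^sup>2" using K0 g0 gsd lg
      by (intro divide_right_mono mult_left_mono) (auto simp: field_simps)
    finally show ?thesis .
  qed
  have ll: "k / ((gsd + 2) * g\<^sup>2) \<le> e / (gsd * g + 2)"
  proof -
    have "k / ((gsd + 2) * g\<^sup>2) = (k / g) / ((gsd + 2) * g)" by (simp add: power2_eq_square field_simps)
    also have "\<dots> \<le> e / (gsd * g + 2)"
    proof (rule frac_le)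
      show "0 < gsd * g + 2" using gsd g0 by (simp add: add_pos_pos)
      show "gsd * g + 2 \<le> (gsd + 2) * g" using g1 by (simp add: algebra_simps)
    qed (use el' e0 in auto)
    finally show ?thesis .
  qed
  have oe1: "0 \<le> 1 - e" "1 - e \<le> 1" using oe e0 by linarith+
  show "k / ((gsd + 2) * g\<^sup>2) \<le> SER M Ts Lsd Lsr Lrd delta rho g"
    unfolding S using ll PE0 oe1 Z10 Z20 by (smt (verit) mult_nonneg_nonneg)
  have PCu: "(1 - e) * (Z1 + Z2) \<le> Z1 + Z2" using oe1 Z10 Z20 by (simp add: mult_left_le_one_le)
  have "SER M Ts Lsd Lsr Lrd delta rho g \<le>
     2 * (A1 * K * (2 + 2 * L)) * (1 + ln g) / g\<^sup>2 + 2 / (delta * grd * gsd * rho) * (1 + ln cc) * (1 + ln g) / g\<^sup>2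
     + A1 * K * (2 + 2 * L) * (1 + ln g) / g\<^sup>2 + K / gsd * (1 + ln g) / g\<^sup>2"
    unfolding S using PCu Z1u Z2u PEu1 lu by linarith
  also have "\<dots> = (2 * (A1 * K * (2 + 2 * L)) + 2 / (delta * grd * gsd * rho) * (1 + ln cc)
      + A1 * K * (2 + 2 * L) + K / gsd) * (1 + ln g) / g\<^sup>2"
    by (simp only: add_divide_distrib[symmetric] distrib_right)
  also have "2 * (A1 * K * (2 + 2 * L)) + 2 / (delta * grd * gsd * rho) * (1 + ln cc)
      + A1 * K * (2 + 2 * L) + K / gsd = B" unfolding B_def cc_def by linarith
  finally show "SER M Ts Lsd Lsr Lrd delta rho g \<le> B * (1 + ln g) / g\<^sup>2" .
qed
lemma ln_over_sq: "0 < (c::real) \<Longrightarrow> 0 < g \<Longrightarrow> ln (c / g\<^sup>2) = ln c - 2 * ln g"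
  by (simp add: ln_div ln_realpow)

theorem mainTheorem3:
  fixes M :: nat and Ts Lsd Lsr Lrd delta rho :: real
  assumes "M \<ge> 2" and "Ts > 0" and "Lsd > 0" and "Lsr > 0" and "Lrd > 0"
    and "0 < delta" and "delta \<le> 1" and "0 < rho" and "rho < 1"
  shows "(\<forall>\<^sub>F g in at_top. 0 < eps_err M rho Ts Lsr g \<and> eps_err M rho Ts Lsr g < 1
                              \<and> 0 < SER M Ts Lsd Lsr Lrd delta rho g)
     \<and> ((\<lambda>g. ln (SER M Ts Lsd Lsr Lrd delta rho g) / ln g) \<longlongrightarrow> -2) at_top"
proof -
  obtain k K where k: "0 < k" and evk: "\<forall>\<^sub>F g in at_top. k / g \<le> eps_err M rho Ts Lsr g \<and>
            eps_err M rho Ts Lsr g \<le> K / g \<and> eps_err M rho Ts Lsr g \<le> 1/2"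
    using eps_bounds[of M Ts Lsr rho] assms by blast
  define gsd where "gsd = g_sd M Ts Lsd"
  define grd where "grd = g_rd M Ts Lsr Lrd"
  define L where "L = \<bar>ln ((real M - 1) / k)\<bar>"
  define A1 where "A1 = sqrt pi * (2 * gsd) powr (-1/4) / 4 * (gsd / 2) powr (-3/4)"
  define B where "B = 3 * (A1 * K * (2 + 2 * L)) + 2 / (delta * grd * gsd * rho) * (1 + ln (1 + delta * grd / 2)) + K / gsd"
  have sinpos: "sin (pi / real M) > 0" using assms(1) by (intro sin_gt_zero) (auto simp: field_simps)
  have gsd: "gsd > 0" using sinpos assms by (simp add: gsd_def g_sd_def)
  define c where "c = k / (gsd + 2)"
  have c: "c > 0" using k gsd by (simp add: c_def)
  let ?S = "SER M Ts Lsd Lsr Lrd delta rho"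
  have ev: "\<forall>\<^sub>F g in at_top. (0 < eps_err M rho Ts Lsr g \<and> eps_err M rho Ts Lsr g < 1 \<and> 0 < ?S g)
      \<and> (ln c - 2 * ln g) / ln g \<le> ln (?S g) / ln g
      \<and> ln (?S g) / ln g \<le> (ln B + ln (1 + ln g) - 2 * ln g) / ln g"
    using evk eventually_ge_at_top[of 2]
  proof eventually_elim
    case (elim g)
    have g1: "g \<ge> 1" and g0: "g > 0" using elim by auto
    have lg: "ln g > 0" using elim by simp
    note cb = core[OF assms(1-6,8,9) g1 k _ _ _ gsd_def grd_def L_def A1_def B_def]
    have lo: "c / g\<^sup>2 \<le> ?S g" using cb(1) elim by (simp add: c_def)
    have up: "?S g \<le> B * (1 + ln g) / g\<^sup>2" using cb(2) elim by simp
    have cg: "0 < c / g\<^sup>2" using c g0 by simp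
    have Sp: "0 < ?S g" using lo cg by linarith
    have e0: "0 < eps_err M rho Ts Lsr g" using elim k g0
      by (smt (verit) divide_pos_pos)
    have e1: "eps_err M rho Ts Lsr g < 1" using elim by linarith
    have l1: "ln c - 2 * ln g \<le> ln (?S g)"
      using ln_over_sq[OF c g0] lo cg Sp by (metis ln_le_cancel_iff)
    have Bp: "0 < B * (1 + ln g) / g\<^sup>2" using Sp up by linarith
    have P: "0 < 1 + ln g" using lg by linarith
    have B0: "0 < B"
    proof -
      have "0 < B * (1 + ln g)" using Bp g0 by (simp add: zero_less_divide_iff)
      thus ?thesis using P by (simp add: zero_less_mult_iff)
    qed
    have "ln (?S g) \<le> ln (B * (1 + ln g) / g\<^sup>2)" using up Sp Bp by simp
    also have "\<dots> = ln B + ln (1 + ln g) - 2 * ln g"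
      using ln_over_sq[of "B * (1 + ln g)" g] B0 P g0 by (simp add: ln_mult)
    finally have l2: "ln (?S g) \<le> ln B + ln (1 + ln g) - 2 * ln g" .
    show ?case using e0 e1 Sp l1 l2 lg by (auto intro: divide_right_mono)
  qed
  have lim1: "((\<lambda>g::real. (ln c - 2 * ln g) / ln g) \<longlongrightarrow> -2) at_top" by real_asymp
  have lim2: "((\<lambda>g::real. (ln B + ln (1 + ln g) - 2 * ln g) / ln g) \<longlongrightarrow> -2) at_top" by real_asymp
  have "((\<lambda>g. ln (?S g) / ln g) \<longlongrightarrow> -2) at_top"
    by (rule tendsto_sandwich[OF _ _ lim1 lim2]) (use ev in \<open>auto elim: eventually_mono\<close>)
  moreover have "\<forall>\<^sub>F g in at_top. 0 < eps_err M rho Ts Lsr g \<and> eps_err M rho Ts Lsr g < 1 \<and> 0 < ?S g"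
    using ev by (rule eventually_mono) auto
  ultimately show ?thesis by blast
qed
end
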